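(* In the setting of the context, for every $j\in[N]$, $s\in\Gamma$, $k\in[n]$ and $\dagger\in\{+,-\}$, $$\nu^{s\bar P}\big(\pi_{s\bar P}\varphi(Z^\dagger_{j,s,k})\big)\le\frac1{M_k}\int u^\dagger_k\,d\nu^{sP}.$$
   Context: Standing setting: $\Gamma$ countably infinite, $n\in\mathbb N$, $\mathbb Z\Gamma$ the integral group ring (product $(fg)_t=\sum_sf_{ts^{-1}}g_s$, involution $(f^* )_s=f_{s^{-1}}$, $(f^* )^{(km)}=(f^{(mk)})^*$). $f=M-g\in M_n(\mathbb Z\Gamma)$, $M=\mathrm{diag}(M_1,\dots,M_n)$ positive integers, $M_k>\sum_m\|g^{(km)}\|_1$, and a subsemigroup $P\subseteq\Gamma\setminus\{e_\Gamma\}$ containing all $\mathrm{supp}(g^{(km)})$; $\bar P=P\cup\{e_\Gamma\}$, $\bar M=\max_kM_k$, $S_f=\prod_k\{0,\dots,M_k-1\}$, $Y=S_f^\Gamma$ (row vectors, entries $y_{s,k}$, $(yF)_m=\sum_ky_kF^{(km)}$ by convolution). $\nu$ is a probability measure on $S_f$ whose marginal on each factor $\{0,\dots,M_k-1\}$ is uniform; for $E\subseteq\Gamma$, $\nu^E$ is the product measure on $S_f^E$ and $\pi_E:S_f^\Gamma\to S_f^E$ the restriction. $N\ge\bar M\|(f^* )^{-1}\|_{1,\infty}$ fixed integer, $V=(\{-N,\dots,N\}^\Gamma)^n\setminus\{0\}$, $Z=\{(y,c)\in Y\times V: y+cf^*\in Y\}$, $\varphi:Y\times V\to Y$ the projection,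 $Z^+_{j,s,k}=\{(y,c)\in Z:\max_{t,m}|c_{t,m}|=c_{s,k}=j\}$, $Z^-_{j,s,k}=\{(y,c)\in Z:\max_{t,m}|c_{t,m}|=-c_{s,k}=j\}$. $A_k=\{(a,m):g^{(km)}_a\neq0\}$; for $B_k\subseteq A_k$ and $\dagger\in\{+,-\}$, $Z^\dagger_{j,s,k,B_k}$ is the set of $(y,c)\in Z^\dagger_{j,s,k}$ with $c_{sa,m}=\dagger\mathrm{sgn}(g^{(km)}_a)j$ for $(a,m)\in B_k$ and $c_{sa,m}\neq\dagger\mathrm{sgn}(g^{(km)}_a)j$ for $(a,m)\in A_k\setminus B_k$, and $Z^\dagger_{j,s,k,B_k,i}=\{(y,c)\in Z^\dagger_{j,s,k,B_k}:y_{s,k}=i\}$. Finally $u^\dagger_k:S_f^{sP}\to\mathbb R$ is $u^\dagger_k=\sum_{i=0}^{M_k-1}\chi_{\pi_{sP}\varphi(\bigcup_{B_k\subseteq A_k}Z^\dagger_{j,s,k,B_k,i})}$ ($\chi$ denotes characteristic function). *)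

theory Defs
  imports "HOL-Probability.Probability"
begin

text \<open>The group Gamma is a type of class group_add, written additively:
  the product s t is s + t, the identity is 0, the inverse of s is - s.
  Elements of the integral group ring are finitely supported functions 'g => int;
  an n x n matrix is a function nat => nat => 'g => int (entries k m with k,m < n).\<close>

definition supp :: "('g \<Rightarrow> 'a::zero) \<Rightarrow> 'g set" where
  "supp F = {u. F u \<noteq> 0}"

definition gr_star :: "('g::group_add \<Rightarrow> 'a) \<Rightarrow> 'g \<Rightarrow> 'a" where
  "gr_star F u = F (- u)"

definition mat_star :: "(nat \<Rightarrow> nat \<Rightarrow> 'g::group_add \<Rightarrow> 'a) \<Rightarrow> nat \<Rightarrow> nat \<Rightarrow> 'g \<Rightarrow> 'a" where
  "mat_star F k m = gr_star (F m k)"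

definition fmat :: "(nat \<Rightarrow> nat) \<Rightarrow> (nat \<Rightarrow> nat \<Rightarrow> 'g::zero \<Rightarrow> int) \<Rightarrow> nat \<Rightarrow> nat \<Rightarrow> 'g \<Rightarrow> int" where
  "fmat M g k m u = (if k = m \<and> u = 0 then int (M k) else 0) - g k m u"

definition vconv :: "('g::group_add \<Rightarrow> int) \<Rightarrow> ('g \<Rightarrow> int) \<Rightarrow> 'g \<Rightarrow> int" where
  "vconv x F t = (\<Sum>u\<in>supp F. x (t - u) * F u)"

definition row_mult :: "nat \<Rightarrow> ('g::group_add \<Rightarrow> nat \<Rightarrow> int) \<Rightarrow> (nat \<Rightarrow> nat \<Rightarrow> 'g \<Rightarrow> int) \<Rightarrow> 'g \<Rightarrow> nat \<Rightarrow> int" where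
  "row_mult n y F t m = (if m < n then (\<Sum>k<n. vconv (\<lambda>t'. y t' k) (F k m) t) else 0)"

definition l1norm :: "('g \<Rightarrow> real) \<Rightarrow> real" where
  "l1norm x = (\<Sum>\<^sub>\<infinity>u. \<bar>x u\<bar>)"

definition is_l1_inverse :: "nat \<Rightarrow> (nat \<Rightarrow> nat \<Rightarrow> 'g::group_add \<Rightarrow> int) \<Rightarrow> (nat \<Rightarrow> nat \<Rightarrow> 'g \<Rightarrow> real) \<Rightarrow> bool" where
  "is_l1_inverse n F h \<longleftrightarrow>
     (\<forall>k<n. \<forall>m<n. (\<lambda>u. \<bar>h k m u\<bar>) summable_on UNIV) \<and>
     (\<forall>k<n. \<forall>m<n. \<forall>t. (\<Sum>l<n. \<Sum>u\<in>supp (F k l). real_of_int (F k l u) * h l m (- u + t))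
                       = (if k = m \<and> t = 0 then 1 else 0)) \<and>
     (\<forall>k<n. \<forall>m<n. \<forall>t. (\<Sum>l<n. \<Sum>u\<in>supp (F l m). h k l (t - u) * real_of_int (F l m u))
                       = (if k = m \<and> t = 0 then 1 else 0))"

text \<open>The norm ||A||_{1,infinity}: operator norm of y |-> yA on (l^infinity)^n (row vectors),
  i.e. max over columns m of sum_k ||A^(km)||_1.\<close>
definition norm_1inf :: "nat \<Rightarrow> (nat \<Rightarrow> nat \<Rightarrow> 'g \<Rightarrow> real) \<Rightarrow> real" where
  "norm_1inf n A = Max ((\<lambda>m. \<Sum>k<n. l1norm (A k m)) ` {..<n})"

definition Sf :: "nat \<Rightarrow> (nat \<Rightarrow> nat) \<Rightarrow> (nat \<Rightarrow> int) set" where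
  "Sf n M = {x. (\<forall>k<n. 0 \<le> x k \<and> x k < int (M k)) \<and> (\<forall>k. n \<le> k \<longrightarrow> x k = 0)}"

definition Yset :: "nat \<Rightarrow> (nat \<Rightarrow> nat) \<Rightarrow> ('g \<Rightarrow> nat \<Rightarrow> int) set" where
  "Yset n M = {y. \<forall>s. y s \<in> Sf n M}"

definition Vset :: "nat \<Rightarrow> nat \<Rightarrow> ('g \<Rightarrow> nat \<Rightarrow> int) set" where
  "Vset n N = {c. (\<forall>t m. m < n \<longrightarrow> \<bar>c t m\<bar> \<le> int N) \<and> (\<forall>t m. n \<le> m \<longrightarrow> c t m = 0)
                  \<and> c \<noteq> (\<lambda>_ _. 0)}"

definition Zset :: "nat \<Rightarrow> (nat \<Rightarrow> nat) \<Rightarrow> nat \<Rightarrow> (nat \<Rightarrow> nat \<Rightarrow> 'g::group_add \<Rightarrow> int)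
                     \<Rightarrow> (('g \<Rightarrow> nat \<Rightarrow> int) \<times> ('g \<Rightarrow> nat \<Rightarrow> int)) set" where
  "Zset n M N g = {(y, c). y \<in> Yset n M \<and> c \<in> Vset n N \<and>
      (\<lambda>t m. y t m + row_mult n c (mat_star (fmat M g)) t m) \<in> Yset n M}"

text \<open>Z^dagger_{j,s,k}, with dagger encoded by sg = 1 (for +) or sg = -1 (for -).\<close>
definition Zsig :: "nat \<Rightarrow> (nat \<Rightarrow> nat) \<Rightarrow> nat \<Rightarrow> (nat \<Rightarrow> nat \<Rightarrow> 'g::group_add \<Rightarrow> int)
                     \<Rightarrow> int \<Rightarrow> nat \<Rightarrow> 'g \<Rightarrow> nat \<Rightarrow> (('g \<Rightarrow> nat \<Rightarrow> int) \<times> ('g \<Rightarrow> nat \<Rightarrow> int)) set" where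
  "Zsig n M N g sg j s k = {(y, c) \<in> Zset n M N g. sg * c s k = int j \<and>
      (\<forall>t m. m < n \<longrightarrow> \<bar>c t m\<bar> \<le> int j)}"

definition Aset :: "nat \<Rightarrow> (nat \<Rightarrow> nat \<Rightarrow> 'g \<Rightarrow> int) \<Rightarrow> nat \<Rightarrow> ('g \<times> nat) set" where
  "Aset n g k = {(a, m). m < n \<and> g k m a \<noteq> 0}"

definition ZsigB :: "nat \<Rightarrow> (nat \<Rightarrow> nat) \<Rightarrow> nat \<Rightarrow> (nat \<Rightarrow> nat \<Rightarrow> 'g::group_add \<Rightarrow> int)
                     \<Rightarrow> int \<Rightarrow> nat \<Rightarrow> 'g \<Rightarrow> nat \<Rightarrow> ('g \<times> nat) set
                     \<Rightarrow> (('g \<Rightarrow> nat \<Rightarrow> int) \<times> ('g \<Rightarrow> nat \<Rightarrow> int)) set" where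
  "ZsigB n M N g sg j s k B = {(y, c) \<in> Zsig n M N g sg j s k.
      (\<forall>(a, m) \<in> B. c (s + a) m = sg * sgn (g k m a) * int j) \<and>
      (\<forall>(a, m) \<in> Aset n g k - B. c (s + a) m \<noteq> sg * sgn (g k m a) * int j)}"

definition ZsigBi :: "nat \<Rightarrow> (nat \<Rightarrow> nat) \<Rightarrow> nat \<Rightarrow> (nat \<Rightarrow> nat \<Rightarrow> 'g::group_add \<Rightarrow> int)
                     \<Rightarrow> int \<Rightarrow> nat \<Rightarrow> 'g \<Rightarrow> nat \<Rightarrow> ('g \<times> nat) set \<Rightarrow> int
                     \<Rightarrow> (('g \<Rightarrow> nat \<Rightarrow> int) \<times> ('g \<Rightarrow> nat \<Rightarrow> int)) set" where
  "ZsigBi n M N g sg j s k B i = {(y, c) \<in> ZsigB n M N g sg j s k B. y s k = i}"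

definition ltrans :: "'g::group_add \<Rightarrow> 'g set \<Rightarrow> 'g set" where
  "ltrans s E = (\<lambda>p. s + p) ` E"

definition nu_pow :: "(nat \<Rightarrow> int) pmf \<Rightarrow> 'g set \<Rightarrow> ('g \<Rightarrow> nat \<Rightarrow> int) measure" where
  "nu_pow \<nu> E = PiM E (\<lambda>_. measure_pmf \<nu>)"

definition proj :: "'g set \<Rightarrow> ('g \<Rightarrow> nat \<Rightarrow> int) \<Rightarrow> ('g \<Rightarrow> nat \<Rightarrow> int)" where
  "proj E y = restrict y E"

definition ufun :: "nat \<Rightarrow> (nat \<Rightarrow> nat) \<Rightarrow> nat \<Rightarrow> (nat \<Rightarrow> nat \<Rightarrow> 'g::group_add \<Rightarrow> int) \<Rightarrow> 'g set
                     \<Rightarrow> int \<Rightarrow> nat \<Rightarrow> 'g \<Rightarrow> nat \<Rightarrow> ('g \<Rightarrow> nat \<Rightarrow> int) \<Rightarrow> real" where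
  "ufun n M N g P sg j s k x = (\<Sum>i<M k.
      indicator (proj (ltrans s P) ` fst ` (\<Union>B\<in>Pow (Aset n g k). ZsigBi n M N g sg j s k B (int i))) x)"

end

theory Submission
  imports Defs "HOL-Library.Diagonal_Subsequence"
begin

lemma diag_extract:
  fixes f :: "nat \<Rightarrow> 'i \<Rightarrow> 'a"
  assumes cnt: "countable (UNIV::'i set)" and fin: "\<And>i. finite (K i)" and mem: "\<And>m i. f m i \<in> K i"
  shows "\<exists>r z. strict_mono r \<and> (\<forall>i. \<forall>\<^sub>F m in sequentially. f (r m) i = z i)"
proof -
  define e where "e = from_nat_into (UNIV::'i set)"
  have surj: "range e = UNIV" unfolding e_def using cnt by (simp add: range_from_nat_into)
  define P where "P = (\<lambda>n (s::nat\<Rightarrow>nat). \<exists>v. \<forall>m. f (s m) (e n) = v)"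
  interpret subseqs P
  proof
    fix n and s :: "nat \<Rightarrow> nat" assume "strict_mono s"
    have "(\<lambda>m. f (s m) (e n)) ` UNIV \<subseteq> K (e n)" using mem by blast
    then have "finite ((\<lambda>m. f (s m) (e n)) ` UNIV)" using fin[of "e n"] by (rule finite_subset)
    then obtain v where "infinite ((\<lambda>m. f (s m) (e n)) -` {v})"
      by (rule inf_img_fin_domE) (rule infinite_UNIV_nat)
    then have inf: "infinite {m. f (s m) (e n) = v}" by (simp add: vimage_def)
    define r' where "r' = enumerate {m. f (s m) (e n) = v}"
    have "strict_mono r'" unfolding r'_def using inf by (simp add: strict_mono_enumerate)
    moreover have "P n (s \<circ> r')" unfolding P_def r'_def using enumerate_in_set[OF inf] by auto
    ultimately show "\<exists>r'. strict_mono r' \<and> P n (s \<circ> r')" by blast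
  qed
  have H: "P k (diagseq \<circ> (+) (Suc k))" for k
    by (rule diagseq_holds) (auto simp: P_def)
  define z where "z i = f (diagseq (Suc (inv e i))) i" for i
  have "\<forall>\<^sub>F m in sequentially. f (diagseq m) i = z i" for i
  proof -
    define n where "n = inv e i"
    have en: "e n = i" unfolding n_def using surj by (metis UNIV_I f_inv_into_f)
    obtain v where v: "\<And>m. f (diagseq (Suc n + m)) i = v" using H[of n] en unfolding P_def by auto
    have "z i = v" unfolding z_def n_def[symmetric] using v[of 0] by simp
    then show ?thesis unfolding eventually_sequentially
      by (intro exI[of _ "Suc n"]) (metis v le_add_diff_inverse)
  qed
  then show ?thesis using subseq_diagseq by blast
qed

lemma ev_transfer: "(\<And>m. Q (a m)) \<Longrightarrow> eventually (\<lambda>m. a m = b) sequentially \<Longrightarrow> Q b"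
  unfolding eventually_sequentially by (metis order_refl)

lemma vconv_ev:
  assumes "\<And>t. \<forall>\<^sub>F m in sequentially. xs m t = x t"
  shows "\<forall>\<^sub>F m in sequentially. vconv (xs m) F t = vconv x F t"
proof (cases "finite (supp F)")
  case True
  have "\<forall>\<^sub>F m in sequentially. \<forall>u\<in>supp F. xs m (t - u) = x (t - u)"
    using True assms by (simp add: eventually_ball_finite)
  then show ?thesis unfolding vconv_def by eventually_elim simp
next
  case False
  then show ?thesis unfolding vconv_def by simp
qed

lemma row_mult_ev:
  assumes "\<And>t k. \<forall>\<^sub>F m in sequentially. cs m t k = c t k"
  shows "\<forall>\<^sub>F m in sequentially. row_mult n (cs m) F t k' = row_mult n c F t k'"
proof -
  have "\<forall>\<^sub>F m in sequentially. \<forall>k\<in>{..<n}. vconv (\<lambda>t'. cs m t' k) (F k k') t = vconv (\<lambda>t'. c t' k) (F k k') t"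
    by (simp add: eventually_ball_finite vconv_ev assms)
  then show ?thesis unfolding row_mult_def by eventually_elim simp
qed

lemma Zsig_closed:
  fixes g :: "nat \<Rightarrow> nat \<Rightarrow> 'g::group_add \<Rightarrow> int" and ys cs :: "nat \<Rightarrow> 'g \<Rightarrow> nat \<Rightarrow> int"
  assumes Z: "\<And>m. (ys m, cs m) \<in> Zsig n M N g sg j s k"
    and ly: "\<And>t k. \<forall>\<^sub>F m in sequentially. ys m t k = y t k"
    and lc: "\<And>t k. \<forall>\<^sub>F m in sequentially. cs m t k = c t k"
    and j: "1 \<le> j"
  shows "(y, c) \<in> Zsig n M N g sg j s k"
proof -
  let ?F = "mat_star (fmat M g)"
  have Z': "\<And>m. ys m \<in> Yset n M \<and> cs m \<in> Vset n N \<and>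
      (\<lambda>t m'. ys m t m' + row_mult n (cs m) ?F t m') \<in> Yset n M \<and> sg * cs m s k = int j \<and>
      (\<forall>t m'. m' < n \<longrightarrow> \<bar>cs m t m'\<bar> \<le> int j)"
    using Z unfolding Zsig_def Zset_def by auto
  have Y: "y \<in> Yset n M"
    unfolding Yset_def Sf_def
  proof (intro allI CollectI conjI impI)
    fix t k' assume "k' < n"
    show "0 \<le> y t k'" by (rule ev_transfer[OF _ ly[of t k']]) (use Z' \<open>k' < n\<close> in \<open>auto simp: Yset_def Sf_def\<close>)
    show "y t k' < int (M k')" by (rule ev_transfer[OF _ ly[of t k']]) (use Z' \<open>k' < n\<close> in \<open>auto simp: Yset_def Sf_def\<close>)
  next
    fix t k' assume "n \<le> k'"
    show "y t k' = 0" by (rule ev_transfer[OF _ ly[of t k']]) (use Z' \<open>n \<le> k'\<close> in \<open>auto simp: Yset_def Sf_def\<close>)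
  qed
  have cs: "sg * c s k = int j" by (rule ev_transfer[OF _ lc[of s k]]) (use Z' in auto)
  have cb: "\<bar>c t m'\<bar> \<le> int j" if "m' < n" for t m'
    by (rule ev_transfer[OF _ lc[of t m']]) (use Z' that in auto)
  have V: "c \<in> Vset n N" unfolding Vset_def
  proof (intro CollectI conjI allI impI)
    fix t m' assume "m' < n"
    show "\<bar>c t m'\<bar> \<le> int N" by (rule ev_transfer[OF _ lc[of t m']]) (use Z' \<open>m' < n\<close> in \<open>auto simp: Vset_def\<close>)
  next
    fix t m' assume "n \<le> m'"
    show "c t m' = 0" by (rule ev_transfer[OF _ lc[of t m']]) (use Z' \<open>n \<le> m'\<close> in \<open>auto simp: Vset_def\<close>)
  next
    show "c \<noteq> (\<lambda>_ _. 0)" using cs j by auto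
  qed
  have ev2: "\<forall>\<^sub>F m in sequentially. ys m t m' + row_mult n (cs m) ?F t m' = y t m' + row_mult n c ?F t m'" for t m'
    using ly[of t m'] row_mult_ev[OF lc, where n=n and F="?F" and t=t and k'=m'] by eventually_elim simp
  have W: "(\<lambda>t m'. y t m' + row_mult n c ?F t m') \<in> Yset n M"
    unfolding Yset_def Sf_def
  proof (intro allI CollectI conjI impI)
    fix t k' assume "k' < n"
    show "0 \<le> y t k' + row_mult n c ?F t k'" by (rule ev_transfer[OF _ ev2[of t k']]) (use Z' \<open>k' < n\<close> in \<open>auto simp: Yset_def Sf_def\<close>)
    show "y t k' + row_mult n c ?F t k' < int (M k')" by (rule ev_transfer[OF _ ev2[of t k']]) (use Z' \<open>k' < n\<close> in \<open>auto simp: Yset_def Sf_def\<close>)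
  next
    fix t k' assume "n \<le> k'"
    show "y t k' + row_mult n c ?F t k' = 0" by (rule ev_transfer[OF _ ev2[of t k']]) (use Z' \<open>n \<le> k'\<close> in \<open>auto simp: Yset_def Sf_def row_mult_def\<close>)
  qed
  show ?thesis unfolding Zsig_def Zset_def using Y V W cs cb by auto
qed

definition SC :: "(('g \<Rightarrow> nat \<Rightarrow> int) \<times> ('g \<Rightarrow> nat \<Rightarrow> int)) set \<Rightarrow> bool" where
  "SC Z \<longleftrightarrow> (\<forall>ys cs y c. (\<forall>m. (ys m, cs m) \<in> Z) \<longrightarrow>
      (\<forall>t k. \<forall>\<^sub>F m in sequentially. ys m t k = y t k) \<longrightarrow>
      (\<forall>t k. \<forall>\<^sub>F m in sequentially. cs m t k = c t k) \<longrightarrow> (y, c) \<in> Z)"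

lemma SC_D: "SC Z \<Longrightarrow> (\<And>m. (ys m, cs m) \<in> Z) \<Longrightarrow>
   (\<And>t k. \<forall>\<^sub>F m in sequentially. ys m t k = y t k) \<Longrightarrow>
   (\<And>t k. \<forall>\<^sub>F m in sequentially. cs m t k = c t k) \<Longrightarrow> (y, c) \<in> Z"
  unfolding SC_def by (erule allE[of _ ys], erule allE[of _ cs], erule allE[of _ y], erule allE[of _ c]) simp

lemma ev_ex: "eventually P sequentially \<Longrightarrow> \<exists>m. P m"
proof -
  assume "eventually P sequentially"
  then obtain N where "\<forall>n\<ge>N. P n" unfolding eventually_sequentially by blast
  then have "P N" by simp
  then show ?thesis by (rule exI)
qed

lemma img2E:
  assumes "z \<in> f ` fst ` Z"
  obtains q where "q \<in> Z" "z = f (fst q)"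
  using assms by blast

lemma img2I: "q \<in> Z \<Longrightarrow> f (fst q) \<in> f ` fst ` Z"
  by (intro imageI)

lemma restrict_eqD: "restrict f A = restrict g A \<Longrightarrow> d \<in> A \<Longrightarrow> f d = g d"
  by (drule fun_cong[of _ _ d]) simp

lemma finite_Sf: "finite (Sf n M)"
proof -
  have "Sf n M \<subseteq> (\<lambda>f k. if k < n then f k else 0) ` (PiE {..<n} (\<lambda>k. {0..<int (M k)}))"
  proof
    fix x assume x: "x \<in> Sf n M"
    show "x \<in> (\<lambda>f k. if k < n then f k else 0) ` (PiE {..<n} (\<lambda>k. {0..<int (M k)}))"
    proof (rule image_eqI[of _ _ "restrict x {..<n}"])
      show "x = (\<lambda>k. if k < n then restrict x {..<n} k else 0)"
      proof
        fix k show "x k = (if k < n then restrict x {..<n} k else 0)"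
          using x unfolding Sf_def by (cases "k < n") auto
      qed
      show "restrict x {..<n} \<in> PiE {..<n} (\<lambda>k. {0..<int (M k)})"
        using x unfolding Sf_def by auto
    qed
  qed
  moreover have "finite (PiE {..<n} (\<lambda>k. {0..<int (M k)}))" by (intro finite_PiE) auto
  ultimately show ?thesis by (rule finite_subset[OF _ finite_imageI])
qed

lemma proj_meas:
  fixes Z :: "(('g \<Rightarrow> nat \<Rightarrow> int) \<times> ('g \<Rightarrow> nat \<Rightarrow> int)) set" and \<nu> :: "(nat \<Rightarrow> int) pmf"
  assumes cnt: "countable (UNIV :: 'g set)" and sc: "SC Z" and bd: "Z \<subseteq> Yset n M \<times> Vset n N"
  shows "proj D ` fst ` Z \<in> sets (nu_pow \<nu> D)"
proof -
  define e where "e = from_nat_into (UNIV::'g set)"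
  have surj: "range e = UNIV" unfolding e_def using cnt by (simp add: range_from_nat_into)
  define F where "F i = D \<inter> e ` {..<i}" for i
  have finF: "finite (F i)" for i unfolding F_def by auto
  have FD: "F i \<subseteq> D" for i unfolding F_def by auto
  define S where "S i = proj (F i) ` fst ` Z" for i
  have spc: "space (nu_pow \<nu> D) = PiE D (\<lambda>_. UNIV)" by (simp add: nu_pow_def space_PiM)
  define C where "C i = (\<lambda>x. restrict x (F i)) -` S i \<inter> space (nu_pow \<nu> D)" for i
  have Ssets: "S i \<in> sets (PiM (F i) (\<lambda>_. measure_pmf \<nu>))" for i
  proof -
    have "S i \<subseteq> PiE (F i) (\<lambda>_. Sf n M)"
    proof
      fix z assume "z \<in> S i"
      then obtain q where q: "q \<in> Z" "z = proj (F i) (fst q)" unfolding S_def by (rule img2E)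
      then have q2: "z = restrict (fst q) (F i)" unfolding proj_def by simp
      have "fst q \<in> Yset n M" using subsetD[OF bd q(1)] by (simp add: mem_Times_iff)
      then have "\<forall>t. fst q t \<in> Sf n M" unfolding Yset_def by blast
      then show "z \<in> PiE (F i) (\<lambda>_. Sf n M)" unfolding q2 by simp
    qed
    then have fin: "finite (S i)" by (rule finite_subset) (intro finite_PiE finF finite_Sf)
    have "S i = (\<Union>z\<in>S i. PiE (F i) (\<lambda>d. {z d}))"
    proof -
      have "PiE (F i) (\<lambda>d. {z d}) = {z}" if "z \<in> S i" for z
      proof -
        from that have "z \<in> proj (F i) ` fst ` Z" unfolding S_def .
        then obtain q where "q \<in> Z" "z = proj (F i) (fst q)" by (rule img2E)
        then have q: "z = restrict (fst q) (F i)" unfolding proj_def by simp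
        have "PiE (F i) (\<lambda>d. {z d}) = {\<lambda>d\<in>F i. z d}" by (rule PiE_eq_singleton[THEN iffD2]) simp
        also have "(\<lambda>d\<in>F i. z d) = z" unfolding q by auto
        finally show ?thesis .
      qed
      then have "(\<Union>z\<in>S i. PiE (F i) (\<lambda>d. {z d})) = (\<Union>z\<in>S i. {z})" by (intro SUP_cong) auto
      then show ?thesis by simp
    qed
    also have "\<dots> \<in> sets (PiM (F i) (\<lambda>_. measure_pmf \<nu>))"
      using fin finF by (intro sets.finite_UN sets_PiM_I_finite) auto
    finally show ?thesis .
  qed
  have Csets: "C i \<in> sets (nu_pow \<nu> D)" for i
    unfolding C_def nu_pow_def
    by (rule measurable_sets[OF measurable_restrict_subset[OF FD] Ssets])
  have eq: "proj D ` fst ` Z = (\<Inter>i\<in>UNIV. C i)"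
  proof
    show "proj D ` fst ` Z \<subseteq> (\<Inter>i\<in>UNIV. C i)"
    proof
      fix x assume "x \<in> proj D ` fst ` Z"
      then obtain q where yc: "q \<in> Z" and x0: "x = proj D (fst q)" by (rule img2E)
      then have x: "x = restrict (fst q) D" unfolding proj_def by simp
      have "x \<in> C i" for i
      proof -
        have "restrict x (F i) = proj (F i) (fst q)" using FD[of i] unfolding x proj_def by (simp add: Int_absorb1)
        then have "restrict x (F i) \<in> S i" unfolding S_def using img2I[OF yc] by simp
        moreover have "x \<in> space (nu_pow \<nu> D)" unfolding spc x by simp
        ultimately show ?thesis unfolding C_def by blast
      qed
      then show "x \<in> (\<Inter>i\<in>UNIV. C i)" by blast
    qed
  next
    show "(\<Inter>i\<in>UNIV. C i) \<subseteq> proj D ` fst ` Z"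
    proof
      fix x assume x: "x \<in> (\<Inter>i\<in>UNIV. C i)"
      have "x \<in> C 0" using x by blast
      then have xs: "x \<in> PiE D (\<lambda>_. UNIV)" using spc unfolding C_def by auto
      have "\<forall>i. \<exists>p. p \<in> Z \<and> restrict (fst p) (F i) = restrict x (F i)"
      proof
        fix i
        have "x \<in> C i" using x by blast
        then have "restrict x (F i) \<in> proj (F i) ` fst ` Z" unfolding C_def S_def by blast
        then obtain q where "q \<in> Z" "restrict x (F i) = proj (F i) (fst q)" by (rule img2E)
        then have "q \<in> Z \<and> restrict (fst q) (F i) = restrict x (F i)"
          unfolding proj_def by simp
        then show "\<exists>p. p \<in> Z \<and> restrict (fst p) (F i) = restrict x (F i)" by (rule exI)
      qed
      from choice[OF this] obtain p where p': "\<forall>i. p i \<in> Z \<and> restrict (fst (p i)) (F i) = restrict x (F i)"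
        by (elim exE)
      have p: "\<And>i. p i \<in> Z" "\<And>i. restrict (fst (p i)) (F i) = restrict x (F i)"
        using p' by simp_all
      define w where "w i = (\<lambda>(t, k). (fst (p i) t k, snd (p i) t k))" for i
      define K where "K = (\<lambda>(t::'g, k). {-int (M k)..int (M k)} \<times> {-int N..int N})"
      have "w i q \<in> K q" for i q
      proof -
        obtain t k where q: "q = (t, k)" by (cases q)
        have "fst (p i) \<in> Yset n M" "snd (p i) \<in> Vset n N" using subsetD[OF bd p(1)[of i]] by (simp_all add: mem_Times_iff)
        then have A: "fst (p i) t \<in> Sf n M" and B: "snd (p i) \<in> Vset n N" unfolding Yset_def by auto
        have "fst (p i) t k \<in> {-int (M k)..int (M k)}"
          using A by (cases "k < n") (auto simp: Sf_def)
        moreover have "snd (p i) t k \<in> {-int N..int N}"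
        proof (cases "k < n")
          case True
          then have "\<bar>snd (p i) t k\<bar> \<le> int N" using B unfolding Vset_def by blast
          then show ?thesis by auto
        next
          case False
          then have "snd (p i) t k = 0" using B unfolding Vset_def by auto
          then show ?thesis by auto
        qed
        ultimately show ?thesis unfolding q w_def K_def by simp
      qed
      moreover have "finite (K q)" for q unfolding K_def by (simp split: prod.split)
      moreover have "countable (UNIV :: ('g \<times> nat) set)"
      proof -
        have "countable ((UNIV::'g set) \<times> (UNIV::nat set))" by (intro countable_SIGMA cnt) auto
        then show ?thesis by simp
      qed
      ultimately obtain r z where r: "strict_mono r" and rz: "\<And>q. \<forall>\<^sub>F m in sequentially. w (r m) q = z q"
        using diag_extract[of K w] by blast
      define y where "y t k = fst (z (t, k))" for t k
      define c where "c t k = snd (z (t, k))" for t k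
      have ly: "\<forall>\<^sub>F m in sequentially. fst (p (r m)) t k = y t k" for t k
        using rz[of "(t,k)"] unfolding w_def y_def by eventually_elim (simp add: prod_eq_iff)
      have lc: "\<forall>\<^sub>F m in sequentially. snd (p (r m)) t k = c t k" for t k
        using rz[of "(t,k)"] unfolding w_def c_def by eventually_elim (simp add: prod_eq_iff)
      have yc: "(y, c) \<in> Z"
        using SC_D[OF sc, where ys="\<lambda>m. fst (p (r m))" and cs="\<lambda>m. snd (p (r m))" and y=y and c=c] p(1) ly lc
        by simp
      have "x = restrict y D"
      proof
        fix d show "x d = restrict y D d"
        proof (cases "d \<in> D")
          case False then show ?thesis using PiE_arb[OF xs] by simp
        next
          case True
          have "d \<in> range e" using surj by simp
          then obtain i where di: "d = e i" by (rule rangeE)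
          have "\<forall>\<^sub>F m in sequentially. d \<in> F (r m)"
            unfolding eventually_sequentially
          proof (intro exI[of _ "Suc i"] allI impI)
            fix m assume "Suc i \<le> m"
            then have "i < r m" using seq_suble[OF r, of m] by linarith
            then show "d \<in> F (r m)" unfolding F_def using True di by auto
          qed
          then have "\<forall>\<^sub>F m in sequentially. fst (p (r m)) d = x d"
            by eventually_elim (rule restrict_eqD[OF p(2)])
          have "x d k = y d k" for k
          proof -
            have "\<forall>\<^sub>F m in sequentially. fst (p (r m)) d = x d \<and> fst (p (r m)) d k = y d k"
              using \<open>\<forall>\<^sub>F m in sequentially. fst (p (r m)) d = x d\<close> ly[of d k] by (rule eventually_conj)
            then obtain m where "fst (p (r m)) d = x d \<and> fst (p (r m)) d k = y d k"
              using ev_ex by blast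
            then show ?thesis by auto
          qed
          then show ?thesis using True by auto
        qed
      qed
      then have "x = proj D (fst (y, c))" unfolding proj_def by simp
      then show "x \<in> proj D ` fst ` Z" using img2I[OF yc, of "proj D"] by simp
    qed
  qed
  have "(\<Inter>i\<in>UNIV. C i) \<in> sets (nu_pow \<nu> D)"
    by (rule sets.countable_INT') (simp_all add: image_subset_iff Csets)
  then show ?thesis unfolding eq .
qed

lemma key_bound:
  fixes \<nu> :: "(nat \<Rightarrow> int) pmf" and E :: "'g set" and A :: "('g \<Rightarrow> nat \<Rightarrow> int) set"
    and U :: "int \<Rightarrow> ('g \<Rightarrow> nat \<Rightarrow> int) set" and Mk :: nat and k :: nat and s :: 'g
  defines "PP \<equiv> PiM E (\<lambda>_. measure_pmf \<nu>)" and "QQ \<equiv> PiM (insert s E) (\<lambda>_. measure_pmf \<nu>)"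
  assumes sE: "s \<notin> E" and Mk: "0 < Mk"
    and Asets: "A \<in> sets QQ" and Usets: "\<And>i. U i \<in> sets PP"
    and sec: "\<And>X x. X \<in> space PP \<Longrightarrow> X(s := x) \<in> A \<Longrightarrow> 0 \<le> x k \<and> x k < int Mk \<and> X \<in> U (x k)"
    and marg: "\<And>i. 0 \<le> i \<Longrightarrow> i < int Mk \<Longrightarrow> measure_pmf.prob \<nu> {x. x k = i} = 1 / real Mk"
  shows "measure QQ A \<le> 1 / real Mk * integral\<^sup>L PP (\<lambda>X. \<Sum>i<Mk. indicator (U (int i)) X)"
proof -
  interpret Pi: prob_space PP unfolding PP_def by (intro prob_space_PiM prob_space_measure_pmf)
  interpret Pi': prob_space QQ unfolding QQ_def by (intro prob_space_PiM prob_space_measure_pmf)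
  interpret PS: pair_prob_space "measure_pmf \<nu>" PP
    by (simp add: pair_prob_space_def pair_sigma_finite_def prob_space_imp_sigma_finite
        prob_space_measure_pmf Pi.prob_space_axioms)
  define f where "f = (\<lambda>p::(nat \<Rightarrow> int) \<times> ('g \<Rightarrow> nat \<Rightarrow> int). (snd p)(s := fst p))"
  have fm: "f \<in> measurable (measure_pmf \<nu> \<Otimes>\<^sub>M PP) QQ"
    unfolding f_def QQ_def
    by (rule measurable_fun_upd[where J=E]) (auto simp: PP_def)
  have dist: "distr (measure_pmf \<nu> \<Otimes>\<^sub>M PP) QQ f = QQ"
  proof -
    have "f = (\<lambda>(x, X). X(s := x))" unfolding f_def by auto
    then show ?thesis unfolding PP_def QQ_def
      using distr_pair_PiM_eq_PiM[of E "\<lambda>_. measure_pmf \<nu>" s] by (simp add: prob_space_measure_pmf)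
  qed
  define G where "G = f -` A \<inter> space (measure_pmf \<nu> \<Otimes>\<^sub>M PP)"
  have Gs: "G \<in> sets (measure_pmf \<nu> \<Otimes>\<^sub>M PP)" unfolding G_def by (rule measurable_sets[OF fm Asets])
  have "emeasure QQ A = emeasure (distr (measure_pmf \<nu> \<Otimes>\<^sub>M PP) QQ f) A" using dist by simp
  also have "\<dots> = emeasure (measure_pmf \<nu> \<Otimes>\<^sub>M PP) G" unfolding G_def by (rule emeasure_distr[OF fm Asets])
  also have "\<dots> = (\<integral>\<^sup>+X. emeasure (measure_pmf \<nu>) ((\<lambda>x. (x, X)) -` G) \<partial>PP)"
    by (rule PS.emeasure_pair_measure_alt2[OF Gs])
  also have "\<dots> \<le> (\<integral>\<^sup>+X. ennreal ((\<Sum>i<Mk. indicator (U (int i)) X) / real Mk) \<partial>PP)"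
  proof (rule nn_integral_mono)
    fix X assume X: "X \<in> space PP"
    define T where "T = {i \<in> {..<Mk}. X \<in> U (int i)}"
    define B where "B i = {x :: nat \<Rightarrow> int. x k = int i}" for i
    have sub: "(\<lambda>x. (x, X)) -` G \<subseteq> (\<Union>i\<in>T. B i)"
    proof
      fix x assume "x \<in> (\<lambda>x. (x, X)) -` G"
      then have "X(s := x) \<in> A" unfolding G_def f_def by simp
      from sec[OF X this] have h: "0 \<le> x k" "x k < int Mk" "X \<in> U (x k)" by auto
      then have "nat (x k) \<in> T" "x \<in> B (nat (x k))" unfolding T_def B_def by auto
      then show "x \<in> (\<Union>i\<in>T. B i)" by blast
    qed
    have "emeasure (measure_pmf \<nu>) ((\<lambda>x. (x, X)) -` G) \<le> emeasure (measure_pmf \<nu>) (\<Union>i\<in>T. B i)"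
      using sub by (rule emeasure_mono) simp
    also have "\<dots> = ennreal (measure (measure_pmf \<nu>) (\<Union>i\<in>T. B i))"
      by (rule measure_pmf.emeasure_eq_measure)
    also have "measure (measure_pmf \<nu>) (\<Union>i\<in>T. B i) = (\<Sum>i\<in>T. measure (measure_pmf \<nu>) (B i))"
      by (rule measure_pmf.finite_measure_finite_Union) (auto simp: T_def B_def disjoint_family_on_def)
    also have "\<dots> = (\<Sum>i\<in>T. 1 / real Mk)"
      by (rule sum.cong) (auto simp: T_def B_def intro!: marg)
    also have "\<dots> = (\<Sum>i<Mk. indicator (U (int i)) X) / real Mk"
    proof -
      have "(\<Sum>i\<in>T. 1 / real Mk) = (\<Sum>i<Mk. if X \<in> U (int i) then 1 / real Mk else 0)"
        unfolding T_def by (rule sum.inter_filter) simp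
      also have "\<dots> = (\<Sum>i<Mk. indicator (U (int i)) X / real Mk)"
        by (rule sum.cong) (auto simp: indicator_def)
      finally show ?thesis by (simp add: sum_divide_distrib)
    qed
    finally show "emeasure (measure_pmf \<nu>) ((\<lambda>x. (x, X)) -` G) \<le> ennreal ((\<Sum>i<Mk. indicator (U (int i)) X) / real Mk)" .
  qed
  also have "(\<integral>\<^sup>+X. ennreal ((\<Sum>i<Mk. indicator (U (int i)) X) / real Mk) \<partial>PP)
      = ennreal (integral\<^sup>L PP (\<lambda>X. (\<Sum>i<Mk. indicator (U (int i)) X) / real Mk))"
  proof (rule nn_integral_eq_integral)
    have Um[measurable]: "U (int i) \<in> sets PP" for i by (rule Usets)
    have meas: "(\<lambda>X. (\<Sum>i<Mk. indicator (U (int i)) X) / real Mk) \<in> borel_measurable PP"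
      by measurable
    show "integrable PP (\<lambda>X. (\<Sum>i<Mk. indicator (U (int i)) X) / real Mk)"
    proof (rule Pi.integrable_const_bound[where B=1])
      show "AE X in PP. norm ((\<Sum>i<Mk. indicator (U (int i)) X) / real Mk) \<le> 1"
      proof (rule AE_I2)
        fix X
        have "(\<Sum>i<Mk. indicator (U (int i)) X) \<le> (\<Sum>i<Mk. (1::real))"
          by (rule sum_mono) (simp add: indicator_def)
        moreover have "0 \<le> (\<Sum>i<Mk. indicator (U (int i)) X :: real)" by (rule sum_nonneg) simp
        ultimately show "norm ((\<Sum>i<Mk. indicator (U (int i)) X) / real Mk) \<le> 1"
          using Mk by (simp add: field_simps)
      qed
    qed (rule meas)
    show "AE X in PP. 0 \<le> (\<Sum>i<Mk. indicator (U (int i)) X) / real Mk"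
      by (rule AE_I2) (simp add: sum_nonneg)
  qed
  finally have le: "emeasure QQ A \<le> ennreal (integral\<^sup>L PP (\<lambda>X. (\<Sum>i<Mk. indicator (U (int i)) X) / real Mk))" .
  have nn: "0 \<le> integral\<^sup>L PP (\<lambda>X. (\<Sum>i<Mk. indicator (U (int i)) X) / real Mk)"
    by (rule integral_nonneg_AE) (rule AE_I2, simp add: sum_nonneg)
  have "measure QQ A \<le> integral\<^sup>L PP (\<lambda>X. (\<Sum>i<Mk. indicator (U (int i)) X) / real Mk)"
    using le nn by (simp add: Pi'.emeasure_eq_measure)
  then show ?thesis by simp
qed

lemma Zsig_sub: "Zsig n M N g sg j s k \<subseteq> Yset n M \<times> Vset n N"
proof
  fix q assume "q \<in> Zsig n M N g sg j s k"
  then have "q \<in> Zset n M N g" unfolding Zsig_def by (simp add: case_prod_beta)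
  then show "q \<in> Yset n M \<times> Vset n N" unfolding Zset_def by (simp add: case_prod_beta mem_Times_iff)
qed

theorem lemma4p5:
  fixes n N j k :: nat and M :: "nat \<Rightarrow> nat" and g :: "nat \<Rightarrow> nat \<Rightarrow> 'g::group_add \<Rightarrow> int"
    and P :: "'g set" and \<nu> :: "(nat \<Rightarrow> int) pmf" and h :: "nat \<Rightarrow> nat \<Rightarrow> 'g \<Rightarrow> real"
    and s :: 'g and sg :: int
  assumes "countable (UNIV :: 'g set)" and "infinite (UNIV :: 'g set)"
    and "\<forall>k<n. 0 < M k"
    and "\<forall>k<n. \<forall>m<n. finite (supp (g k m))"
    and "\<forall>k<n. (\<Sum>m<n. \<Sum>a\<in>supp (g k m). \<bar>g k m a\<bar>) < int (M k)"
    and "0 \<notin> P" and "\<forall>a\<in>P. \<forall>b\<in>P. a + b \<in> P"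
    and "\<forall>k<n. \<forall>m<n. supp (g k m) \<subseteq> P"
    and "set_pmf \<nu> \<subseteq> Sf n M"
    and "\<forall>k<n. \<forall>i. 0 \<le> i \<and> i < int (M k) \<longrightarrow> measure_pmf.prob \<nu> {x. x k = i} = 1 / real (M k)"
    and "is_l1_inverse n (mat_star (fmat M g)) h"
    and "real (Max (M ` {..<n})) * norm_1inf n h \<le> real N"
    and "j \<in> {1..N}" and "k < n" and "sg \<in> {1, -1}"
  shows "proj (ltrans s P \<union> {s}) ` fst ` Zsig n M N g sg j s k \<in> sets (nu_pow \<nu> (ltrans s P \<union> {s}))
       \<and> measure (nu_pow \<nu> (ltrans s P \<union> {s})) (proj (ltrans s P \<union> {s}) ` fst ` Zsig n M N g sg j s k)
           \<le> 1 / real (M k) * integral\<^sup>L (nu_pow \<nu> (ltrans s P)) (ufun n M N g P sg j s k)"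
proof -
  define E where "E = ltrans s P"
  define Z0 where "Z0 = Zsig n M N g sg j s k"
  define Zi where "Zi i = {p \<in> Z0. fst p s k = i}" for i
  define U where "U i = proj E ` fst ` Zi i" for i
  have j1: "1 \<le> j" using assms(13) by simp
  have kn: "k < n" by (rule assms(14))
  have sE: "s \<notin> E"
  proof
    assume "s \<in> E"
    then obtain p where "p \<in> P" "s = s + p" unfolding E_def ltrans_def by blast
    then have "p = 0" using add_left_imp_eq[of s p 0] by simp
    with \<open>p \<in> P\<close> assms(6) show False by simp
  qed
  have E'eq: "ltrans s P \<union> {s} = insert s E" unfolding E_def by auto
  have bd: "Z0 \<subseteq> Yset n M \<times> Vset n N" unfolding Z0_def by (rule Zsig_sub)
  have scZ: "SC Z0" unfolding SC_def
  proof (intro allI impI)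
    fix ys cs y c
    assume a: "\<forall>m. (ys m, cs m) \<in> Z0" "\<forall>t k. \<forall>\<^sub>F m in sequentially. ys m t k = y t k"
      "\<forall>t k. \<forall>\<^sub>F m in sequentially. cs m t k = c t k"
    have z: "\<And>m. (ys m, cs m) \<in> Zsig n M N g sg j s k" using a(1) unfolding Z0_def by blast
    have ly: "\<And>t k'. \<forall>\<^sub>F m in sequentially. ys m t k' = y t k'" using a(2) by blast
    have lc: "\<And>t k'. \<forall>\<^sub>F m in sequentially. cs m t k' = c t k'" using a(3) by blast
    show "(y, c) \<in> Z0" unfolding Z0_def by (rule Zsig_closed[OF z ly lc j1])
  qed
  have scZi: "SC (Zi i)" for i unfolding SC_def
  proof (intro allI impI)
    fix ys cs y c
    assume a: "\<forall>m. (ys m, cs m) \<in> Zi i" "\<forall>t k. \<forall>\<^sub>F m in sequentially. ys m t k = y t k"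
      "\<forall>t k. \<forall>\<^sub>F m in sequentially. cs m t k = c t k"
    have z: "(ys m, cs m) \<in> Z0 \<and> ys m s k = i" for m using a(1) unfolding Zi_def by simp
    have ly: "\<And>t k'. \<forall>\<^sub>F m in sequentially. ys m t k' = y t k'" using a(2) by blast
    have lc: "\<And>t k'. \<forall>\<^sub>F m in sequentially. cs m t k' = c t k'" using a(3) by blast
    have "(y, c) \<in> Z0" by (rule SC_D[OF scZ conjunct1[OF z] ly lc])
    moreover have "y s k = i" by (rule ev_transfer[of "\<lambda>v. v = i", OF conjunct2[OF z] ly])
    ultimately show "(y, c) \<in> Zi i" unfolding Zi_def by simp
  qed
  have bdi: "Zi i \<subseteq> Yset n M \<times> Vset n N" for i using bd unfolding Zi_def by auto
  have Ameas: "proj (insert s E) ` fst ` Z0 \<in> sets (nu_pow \<nu> (insert s E))"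
    by (rule proj_meas[OF assms(1) scZ bd])
  have Umeas: "U i \<in> sets (nu_pow \<nu> E)" for i unfolding U_def by (rule proj_meas[OF assms(1) scZi bdi])
  have Ueq: "(\<Union>B\<in>Pow (Aset n g k). ZsigBi n M N g sg j s k B i) = Zi i" for i
  proof
    show "(\<Union>B\<in>Pow (Aset n g k). ZsigBi n M N g sg j s k B i) \<subseteq> Zi i"
      unfolding Zi_def Z0_def ZsigBi_def ZsigB_def by auto
  next
    show "Zi i \<subseteq> (\<Union>B\<in>Pow (Aset n g k). ZsigBi n M N g sg j s k B i)"
    proof
      fix p assume p: "p \<in> Zi i"
      obtain y c where pyc: "p = (y, c)" by (cases p)
      define B where "B = {(a, m) \<in> Aset n g k. c (s + a) m = sg * sgn (g k m a) * int j}"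
      have "p \<in> ZsigBi n M N g sg j s k B i"
        using p unfolding pyc Zi_def Z0_def ZsigBi_def ZsigB_def B_def by auto
      moreover have "B \<in> Pow (Aset n g k)" unfolding B_def by auto
      ultimately show "p \<in> (\<Union>B\<in>Pow (Aset n g k). ZsigBi n M N g sg j s k B i)" by blast
    qed
  qed
  have ufun_eq: "ufun n M N g P sg j s k = (\<lambda>X. \<Sum>i<M k. indicator (U (int i)) X)"
    unfolding ufun_def U_def Ueq E_def by simp
  have Mk: "0 < M k" using assms(3) kn by simp
  have spc: "space (PiM E (\<lambda>_. measure_pmf \<nu>)) = PiE E (\<lambda>_. UNIV)" by (simp add: space_PiM)
  have bound: "measure (PiM (insert s E) (\<lambda>_. measure_pmf \<nu>)) (proj (insert s E) ` fst ` Z0)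
      \<le> 1 / real (M k) * integral\<^sup>L (PiM E (\<lambda>_. measure_pmf \<nu>)) (\<lambda>X. \<Sum>i<M k. indicator (U (int i)) X)"
  proof (rule key_bound[OF sE Mk])
    show "proj (insert s E) ` fst ` Z0 \<in> sets (PiM (insert s E) (\<lambda>_. measure_pmf \<nu>))"
      using Ameas unfolding nu_pow_def .
    show "U i \<in> sets (PiM E (\<lambda>_. measure_pmf \<nu>))" for i using Umeas unfolding nu_pow_def .
    show "measure_pmf.prob \<nu> {x. x k = i} = 1 / real (M k)" if "0 \<le> i" "i < int (M k)" for i
      using assms(10) kn that by blast
  next
    fix X x
    assume X: "X \<in> space (PiM E (\<lambda>_. measure_pmf \<nu>))" and Xx: "X(s := x) \<in> proj (insert s E) ` fst ` Z0"
    have XE: "X \<in> PiE E (\<lambda>_. UNIV)" using X spc by simp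
    obtain q where q: "q \<in> Z0" "X(s := x) = proj (insert s E) (fst q)" using Xx by (rule img2E)
    have xq: "x = fst q s"
    proof -
      have "(X(s := x)) s = proj (insert s E) (fst q) s" using q(2) by simp
      then show ?thesis unfolding proj_def by simp
    qed
    have Xq: "X = proj E (fst q)"
    proof
      fix d show "X d = proj E (fst q) d"
      proof (cases "d \<in> E")
        case True
        then have "d \<noteq> s" using sE by blast
        have "(X(s := x)) d = proj (insert s E) (fst q) d" using q(2) by simp
        then show ?thesis using True \<open>d \<noteq> s\<close> unfolding proj_def by simp
      next
        case False
        then show ?thesis using PiE_arb[OF XE False] unfolding proj_def by simp
      qed
    qed
    have "fst q \<in> Yset n M" using subsetD[OF bd q(1)] by (simp add: mem_Times_iff)
    then have "fst q s \<in> Sf n M" unfolding Yset_def by blast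
    then have r: "0 \<le> fst q s k" "fst q s k < int (M k)" using kn unfolding Sf_def by auto
    have "q \<in> Zi (fst q s k)" unfolding Zi_def using q(1) by simp
    then have "X \<in> U (fst q s k)" unfolding U_def Xq by (rule img2I)
    then show "0 \<le> x k \<and> x k < int (M k) \<and> X \<in> U (x k)" using r xq by simp
  qed
  show ?thesis
    unfolding E'eq ufun_eq Z0_def[symmetric] E_def[symmetric]
    using Ameas bound unfolding nu_pow_def by simp
qed

end
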